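(* Let $\Omega_1,\Omega_2\subset\mathbb{R}^n$ be nearly convex sets with $\operatorname{ri}\Omega_1\cap\operatorname{ri}\Omega_2\neq\emptyset$. Then $\sigma_{\Omega_1\cap\Omega_2}=\sigma_{\Omega_1}\,\square\,\sigma_{\Omega_2}$. Moreover, for every $v\in\mathbb{R}^n$ with $\sigma_{\Omega_1\cap\Omega_2}(v)\in\mathbb{R}$ there exist $v_1,v_2\in\mathbb{R}^n$ with $v=v_1+v_2$ and $\sigma_{\Omega_1\cap\Omega_2}(v)=\sigma_{\Omega_1}(v_1)+\sigma_{\Omega_2}(v_2)$.
   Context: A set $\Omega$ is nearly convex if there is a convex set $C$ with $C\subset\Omega\subset\overline{C}$; $\operatorname{ri}\Omega=\{a\in\Omega:\exists\delta>0,\ B(a;\delta)\cap\operatorname{aff}\Omega\subset\Omega\}$. Support function: $\sigma_\Omega(v)=\sup\{\langle v,x\rangle:x\in\Omega\}$. Infimal convolution: $(g\square h)(x)=\inf\{g(x_1)+h(x_2):x_1+x_2=x\}$. *)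

theory Defs
  imports "HOL-Analysis.Analysis"
begin

definition nearly_convex :: "'a::euclidean_space set \<Rightarrow> bool" where
  "nearly_convex \<Omega> \<longleftrightarrow> (\<exists>C. convex C \<and> C \<subseteq> \<Omega> \<and> \<Omega> \<subseteq> closure C)"

definition support_fun :: "'a::euclidean_space set \<Rightarrow> 'a \<Rightarrow> ereal" where
  "support_fun \<Omega> v = (SUP x\<in>\<Omega>. ereal (inner v x))"

definition infconv :: "('a::euclidean_space \<Rightarrow> ereal) \<Rightarrow> ('a \<Rightarrow> ereal) \<Rightarrow> 'a \<Rightarrow> ereal" where
  "infconv g h x = (INF p\<in>{p. fst p + snd p = x}. g (fst p) + h (snd p))"

end

theory Submission
  imports Defs
begin

lemma support_closure:
  fixes S :: "'a::euclidean_space set"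
  shows "support_fun (closure S) v = support_fun S v"
proof (rule antisym)
  show "support_fun S v \<le> support_fun (closure S) v"
    unfolding support_fun_def by (rule SUP_subset_mono[OF closure_subset]) simp
next
  show "support_fun (closure S) v \<le> support_fun S v"
    unfolding support_fun_def
  proof (rule SUP_least)
    fix x assume x: "x \<in> closure S"
    show "ereal (inner v x) \<le> (SUP x\<in>S. ereal (inner v x))"
    proof (cases "(SUP x\<in>S. ereal (inner v x))")
      case (real r)
      have "S \<subseteq> {x. inner v x \<le> r}"
      proof
        fix y assume "y \<in> S"
        then have "ereal (inner v y) \<le> ereal r" using real by (metis SUP_upper)
        then show "y \<in> {x. inner v x \<le> r}" by simp
      qed
      then have "closure S \<subseteq> {x. inner v x \<le> r}"
        by (rule closure_minimal) (simp add: closed_halfspace_le)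
      with x real show ?thesis by auto
    next
      case PInf then show ?thesis by simp
    next
      case MInf
      have "S = {}"
      proof (rule equals0I)
        fix y assume "y \<in> S"
        then have "ereal (inner v y) \<le> (SUP x\<in>S. ereal (inner v x))" by (rule SUP_upper)
        with MInf show False by simp
      qed
      with x show ?thesis by simp
    qed
  qed
qed

lemma support_between:
  fixes S C :: "'a::euclidean_space set"
  assumes "C \<subseteq> S" "S \<subseteq> closure C"
  shows "support_fun S v = support_fun C v"
proof (rule antisym)
  show "support_fun C v \<le> support_fun S v"
    unfolding support_fun_def by (rule SUP_subset_mono[OF assms(1)]) simp
  have "support_fun S v \<le> support_fun (closure C) v"
    unfolding support_fun_def by (rule SUP_subset_mono[OF assms(2)]) simp
  then show "support_fun S v \<le> support_fun C v" by (simp add: support_closure)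
qed

lemma main_sep:
  fixes C1 C2 :: "'a::euclidean_space set"
  assumes c1: "convex C1" and c2: "convex C2"
    and r1: "x0 \<in> rel_interior C1" and r2: "x0 \<in> rel_interior C2"
    and bnd: "\<forall>x\<in>C1\<inter>C2. inner v x \<le> \<alpha>"
  shows "\<exists>w. \<forall>x1\<in>C1. \<forall>x2\<in>C2. inner (v - w) x1 + inner w x2 \<le> \<alpha>"
proof -
  have x01: "x0 \<in> C1" and x02: "x0 \<in> C2" using r1 r2 rel_interior_subset by auto
  define K :: "('a \<times> real) set" where
    "K = {(x1 - x2, inner v x1 - \<alpha> - s) | x1 x2 s. x1 \<in> C1 \<and> x2 \<in> C2 \<and> s > 0}"
  have memK: "(x1 - x2, inner v x1 - \<alpha> - s) \<in> K"
    if "x1 \<in> C1" "x2 \<in> C2" "s > 0" for x1 x2 s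
    unfolding K_def using that by blast
  have convK: "convex K"
  proof (rule convexI)
    fix k l :: "'a \<times> real" and u w :: real
    assume "k \<in> K" "l \<in> K" "0 \<le> u" "0 \<le> w" "u + w = 1"
    from \<open>k \<in> K\<close> obtain x1 x2 s where
      k: "k = (x1 - x2, inner v x1 - \<alpha> - s)" "x1 \<in> C1" "x2 \<in> C2" "s > 0"
      unfolding K_def by blast
    from \<open>l \<in> K\<close> obtain y1 y2 t where
      l: "l = (y1 - y2, inner v y1 - \<alpha> - t)" "y1 \<in> C1" "y2 \<in> C2" "t > 0"
      unfolding K_def by blast
    have m1: "u *\<^sub>R x1 + w *\<^sub>R y1 \<in> C1" using c1 k l \<open>0 \<le> u\<close> \<open>0 \<le> w\<close> \<open>u + w = 1\<close>
      by (simp add: convexD)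
    have m2: "u *\<^sub>R x2 + w *\<^sub>R y2 \<in> C2" using c2 k l \<open>0 \<le> u\<close> \<open>0 \<le> w\<close> \<open>u + w = 1\<close>
      by (simp add: convexD)
    have pos: "u * s + w * t > 0"
    proof (cases "u = 0")
      case True then show ?thesis using \<open>u + w = 1\<close> l by simp
    next
      case False then have "u * s > 0" using \<open>0 \<le> u\<close> k by simp
      moreover have "w * t \<ge> 0" using \<open>0 \<le> w\<close> l by simp
      ultimately show ?thesis by linarith
    qed
    have "u *\<^sub>R k + w *\<^sub>R l =
      ((u *\<^sub>R x1 + w *\<^sub>R y1) - (u *\<^sub>R x2 + w *\<^sub>R y2),
        inner v (u *\<^sub>R x1 + w *\<^sub>R y1) - \<alpha> - (u * s + w * t))"
    proof -
      have e1: "u *\<^sub>R (x1 - x2) + w *\<^sub>R (y1 - y2) = (u *\<^sub>R x1 + w *\<^sub>R y1) - (u *\<^sub>R x2 + w *\<^sub>R y2)"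
        by (simp add: algebra_simps)
      have e2': "u * (inner v x1 - \<alpha> - s) + w * (inner v y1 - \<alpha> - t) =
         inner v (u *\<^sub>R x1 + w *\<^sub>R y1) - (u + w) * \<alpha> - (u * s + w * t)"
        by (simp add: inner_add_right algebra_simps)
      have e2: "u * (inner v x1 - \<alpha> - s) + w * (inner v y1 - \<alpha> - t) =
         inner v (u *\<^sub>R x1 + w *\<^sub>R y1) - \<alpha> - (u * s + w * t)"
        using e2' \<open>u + w = 1\<close> by simp
      show ?thesis using k(1) l(1) e1 e2 by simp
    qed
    note eq = this
    show "u *\<^sub>R k + w *\<^sub>R l \<in> K" unfolding eq by (rule memK[OF m1 m2 pos])
  qed
  have Kne: "K \<noteq> {}" using memK[OF x01 x02, of 1] by auto
  have K0: "0 \<notin> K"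
  proof
    assume "0 \<in> K"
    then obtain x1 x2 s where z: "0 = (x1 - x2, inner v x1 - \<alpha> - s)" "x1 \<in> C1" "x2 \<in> C2" "s > 0"
      unfolding K_def by blast
    from z(1) have "x1 = x2" "inner v x1 - \<alpha> - s = 0" by (auto simp: zero_prod_def)
    with z(2,3) have "x1 \<in> C1 \<inter> C2" by simp
    with bnd have "inner v x1 \<le> \<alpha>" by blast
    with \<open>inner v x1 - \<alpha> - s = 0\<close> z(4) show False by linarith
  qed
  obtain a b where aff: "0 + a \<in> affine hull (insert 0 K)" and an: "a \<noteq> 0"
    and ab: "a \<bullet> 0 \<le> b" and ak: "\<And>x. x \<in> K \<Longrightarrow> a \<bullet> x \<ge> b"
    using separating_hyperplane_set_point_inaff[OF convK Kne K0] by blast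
  define p where "p = fst a"
  define q where "q = snd a"
  have a_eq: "a = (p, q)" unfolding p_def q_def by simp
  have H: "p \<bullet> (x1 - x2) + q * (inner v x1 - \<alpha> - s) \<ge> 0"
    if "x1 \<in> C1" "x2 \<in> C2" "s > 0" for x1 x2 s
  proof -
    have "(x1 - x2, inner v x1 - \<alpha> - s) \<in> K" unfolding K_def using that by blast
    from ak[OF this] ab show ?thesis by (simp add: a_eq)
  qed
  have q_le: "q \<le> 0"
  proof (rule ccontr)
    assume "\<not> q \<le> 0"
    then have qp: "q > 0" by simp
    define s where "s = \<bar>inner v x0 - \<alpha>\<bar> + 1"
    have "s > 0" unfolding s_def by simp
    from H[OF x01 x02 this] have "q * (inner v x0 - \<alpha> - s) \<ge> 0" by simp
    then have "inner v x0 - \<alpha> - s \<ge> 0" using qp by (simp add: zero_le_mult_iff)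
    then show False unfolding s_def by linarith
  qed
  have q_ne: "q \<noteq> 0"
  proof
    assume q0: "q = 0"
    have H0: "p \<bullet> (x1 - x2) \<ge> 0" if "x1 \<in> C1" "x2 \<in> C2" for x1 x2
      using H[OF that, of 1] q0 by simp
    have E1: "p \<bullet> (x1 - x0) = 0" if hx: "x1 \<in> C1" for x1
    proof -
      have ge: "p \<bullet> (x1 - x0) \<ge> 0" using H0[OF that x02] .
      obtain e where e: "e > 1" "(1 - e) *\<^sub>R x1 + e *\<^sub>R x0 \<in> C1"
        using convex_rel_interior_iff[of C1 x0] c1 r1 hx x01 by blast
      have "p \<bullet> (((1 - e) *\<^sub>R x1 + e *\<^sub>R x0) - x0) \<ge> 0" using H0[OF e(2) x02] .
      moreover have "((1 - e) *\<^sub>R x1 + e *\<^sub>R x0) - x0 = (1 - e) *\<^sub>R (x1 - x0)"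
        by (simp add: algebra_simps)
      ultimately have "(1 - e) * (p \<bullet> (x1 - x0)) \<ge> 0" by simp
      then have "p \<bullet> (x1 - x0) \<le> 0" using e(1) by (simp add: zero_le_mult_iff)
      with ge show ?thesis by simp
    qed
    have E2: "p \<bullet> (x0 - x2) = 0" if hx: "x2 \<in> C2" for x2
    proof -
      have ge: "p \<bullet> (x0 - x2) \<ge> 0" using H0[OF x01 that] .
      obtain e where e: "e > 1" "(1 - e) *\<^sub>R x2 + e *\<^sub>R x0 \<in> C2"
        using convex_rel_interior_iff[of C2 x0] c2 r2 hx x02 by blast
      have "p \<bullet> (x0 - ((1 - e) *\<^sub>R x2 + e *\<^sub>R x0)) \<ge> 0" using H0[OF x01 e(2)] .
      moreover have "x0 - ((1 - e) *\<^sub>R x2 + e *\<^sub>R x0) = (1 - e) *\<^sub>R (x0 - x2)"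
        by (simp add: algebra_simps)
      ultimately have "(1 - e) * (p \<bullet> (x0 - x2)) \<ge> 0" by simp
      then have "p \<bullet> (x0 - x2) \<le> 0" using e(1) by (simp add: zero_le_mult_iff)
      with ge show ?thesis by simp
    qed
    have "insert 0 K \<subseteq> {z. a \<bullet> z = 0}"
    proof
      fix z assume "z \<in> insert 0 K"
      then show "z \<in> {z. a \<bullet> z = 0}"
      proof
        assume "z \<in> K"
        then obtain x1 x2 s where z: "z = (x1 - x2, inner v x1 - \<alpha> - s)" "x1 \<in> C1" "x2 \<in> C2"
          unfolding K_def by blast
        have "x1 - x2 = (x1 - x0) + (x0 - x2)" by simp
        then have "p \<bullet> (x1 - x2) = 0" using E1[OF z(2)] E2[OF z(3)]
          by (metis add.right_neutral inner_add_right)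
        then show ?thesis using z q0 by (simp add: a_eq)
      qed simp
    qed
    then have "affine hull (insert 0 K) \<subseteq> {z. a \<bullet> z = 0}"
      by (rule hull_minimal) (rule affine_hyperplane)
    with aff have "a \<bullet> a = 0" by auto
    with an show False by simp
  qed
  have qn: "q < 0" using q_le q_ne by simp
  define w where "w = (1 / (- q)) *\<^sub>R p"
  show ?thesis
  proof (intro exI ballI)
    fix x1 x2 assume x1: "x1 \<in> C1" and x2: "x2 \<in> C2"
    define D where "D = p \<bullet> (x1 - x2) + q * (inner v x1 - \<alpha>)"
    have D: "D \<ge> 0"
    proof (rule ccontr)
      assume "\<not> D \<ge> 0"
      then have Dn: "D < 0" by simp
      define s where "s = D / (2 * q)"
      have "s > 0" unfolding s_def using Dn qn by (simp add: divide_neg_neg)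
      from H[OF x1 x2 this] have "D - q * s \<ge> 0" unfolding D_def by (simp add: algebra_simps)
      moreover have "q * s = D / 2" unfolding s_def using qn by simp
      ultimately show False using Dn by simp
    qed
    have "w \<bullet> (x1 - x2) = (p \<bullet> (x1 - x2)) / (- q)" unfolding w_def by simp
    moreover have "(p \<bullet> (x1 - x2)) / (- q) \<ge> inner v x1 - \<alpha>"
      using D qn unfolding D_def by (simp add: field_simps)
    ultimately have "w \<bullet> (x1 - x2) \<ge> inner v x1 - \<alpha>" by simp
    then show "inner (v - w) x1 + inner w x2 \<le> \<alpha>"
      by (simp add: inner_diff_left inner_diff_right)
  qed
qed

lemma support_easy:
  fixes C1 C2 :: "'a::euclidean_space set"
  shows "support_fun (C1 \<inter> C2) (v1 + v2) \<le> support_fun C1 v1 + support_fun C2 v2"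
  unfolding support_fun_def
proof (rule SUP_least)
  fix x assume x: "x \<in> C1 \<inter> C2"
  have "ereal (inner (v1 + v2) x) = ereal (inner v1 x) + ereal (inner v2 x)"
    by (simp add: inner_add_left)
  also have "\<dots> \<le> (SUP x\<in>C1. ereal (inner v1 x)) + (SUP x\<in>C2. ereal (inner v2 x))"
    by (rule add_mono) (use x in \<open>auto intro: SUP_upper\<close>)
  finally show "ereal (inner (v1 + v2) x) \<le> (SUP x\<in>C1. ereal (inner v1 x)) + (SUP x\<in>C2. ereal (inner v2 x))" .
qed

lemma support_exact:
  fixes C1 C2 :: "'a::euclidean_space set"
  assumes c1: "convex C1" and c2: "convex C2"
    and r1: "x0 \<in> rel_interior C1" and r2: "x0 \<in> rel_interior C2"
    and fin: "\<bar>support_fun (C1 \<inter> C2) v\<bar> \<noteq> \<infinity>"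
  shows "\<exists>v1 v2. v = v1 + v2 \<and> support_fun C1 v1 + support_fun C2 v2 \<le> support_fun (C1 \<inter> C2) v"
proof -
  have x01: "x0 \<in> C1" and x02: "x0 \<in> C2" using r1 r2 rel_interior_subset by auto
  from fin obtain \<alpha> where al: "support_fun (C1 \<inter> C2) v = ereal \<alpha>"
    by (cases "support_fun (C1 \<inter> C2) v") auto
  have bnd: "\<forall>x\<in>C1\<inter>C2. inner v x \<le> \<alpha>"
  proof
    fix x assume "x \<in> C1 \<inter> C2"
    then have "ereal (inner v x) \<le> support_fun (C1 \<inter> C2) v"
      unfolding support_fun_def by (rule SUP_upper)
    with al show "inner v x \<le> \<alpha>" by simp
  qed
  obtain w where w: "\<And>x1 x2. x1 \<in> C1 \<Longrightarrow> x2 \<in> C2 \<Longrightarrow> inner (v - w) x1 + inner w x2 \<le> \<alpha>"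
    using main_sep[OF c1 c2 r1 r2 bnd] by blast
  have up1: "support_fun C1 (v - w) \<le> ereal (\<alpha> - inner w x2)" if "x2 \<in> C2" for x2
    unfolding support_fun_def
  proof (rule SUP_least)
    fix x1 assume "x1 \<in> C1"
    from w[OF this that] show "ereal (inner (v - w) x1) \<le> ereal (\<alpha> - inner w x2)" by simp
  qed
  have lo1: "ereal (inner (v - w) x0) \<le> support_fun C1 (v - w)"
    unfolding support_fun_def using x01 by (rule SUP_upper)
  obtain c where c: "support_fun C1 (v - w) = ereal c"
    using up1[OF x02] lo1 by (cases "support_fun C1 (v - w)") auto
  have up2: "support_fun C2 w \<le> ereal (\<alpha> - c)"
    unfolding support_fun_def
  proof (rule SUP_least)
    fix x2 assume "x2 \<in> C2"
    from up1[OF this] c show "ereal (inner w x2) \<le> ereal (\<alpha> - c)" by simp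
  qed
  have "support_fun C1 (v - w) + support_fun C2 w \<le> ereal c + ereal (\<alpha> - c)"
    unfolding c by (rule add_left_mono[OF up2])
  also have "\<dots> = support_fun (C1 \<inter> C2) v" using al by simp
  finally show ?thesis by (intro exI[of _ "v - w"] exI[of _ w]) simp
qed

theorem theorem6p1:
  fixes \<Omega>1 \<Omega>2 :: "'a::euclidean_space set"
  assumes "nearly_convex \<Omega>1" and "nearly_convex \<Omega>2"
    and "rel_interior \<Omega>1 \<inter> rel_interior \<Omega>2 \<noteq> {}"
  shows "support_fun (\<Omega>1 \<inter> \<Omega>2) = infconv (support_fun \<Omega>1) (support_fun \<Omega>2) \<and>
         (\<forall>v. \<bar>support_fun (\<Omega>1 \<inter> \<Omega>2) v\<bar> \<noteq> \<infinity> \<longrightarrow>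
           (\<exists>v1 v2. v = v1 + v2 \<and>
             support_fun (\<Omega>1 \<inter> \<Omega>2) v = support_fun \<Omega>1 v1 + support_fun \<Omega>2 v2))"
proof -
  obtain C1 where c1: "convex C1" "C1 \<subseteq> \<Omega>1" "\<Omega>1 \<subseteq> closure C1"
    using assms(1) unfolding nearly_convex_def by blast
  obtain C2 where c2: "convex C2" "C2 \<subseteq> \<Omega>2" "\<Omega>2 \<subseteq> closure C2"
    using assms(2) unfolding nearly_convex_def by blast
  obtain x0 where x0: "x0 \<in> rel_interior \<Omega>1" "x0 \<in> rel_interior \<Omega>2" using assms(3) by blast
  have riC: "rel_interior \<Omega> \<subseteq> rel_interior C"
    if "convex C" "C \<subseteq> \<Omega>" "\<Omega> \<subseteq> closure C" for \<Omega> C :: "'a set"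
  proof -
    have "affine hull \<Omega> \<subseteq> affine hull (closure C)" using that(3) by (rule hull_mono)
    moreover have "affine hull (closure C) \<subseteq> affine hull \<Omega>"
      using hull_mono[OF that(2), of affine] by (simp add: closure_same_affine_hull)
    ultimately have "rel_interior \<Omega> \<subseteq> rel_interior (closure C)"
      using rel_interior_mono[OF that(3)] by blast
    then show ?thesis using convex_rel_interior_closure[OF that(1)] by simp
  qed
  have r1: "x0 \<in> rel_interior C1" using riC[OF c1] x0 by blast
  have r2: "x0 \<in> rel_interior C2" using riC[OF c2] x0 by blast
  have cl: "closure (C1 \<inter> C2) = closure C1 \<inter> closure C2"
    using closure_Inter_convex[of "{C1, C2}"] c1(1) c2(1) r1 r2 by auto
  have S1: "support_fun \<Omega>1 = support_fun C1" using support_between[OF c1(2,3)] by blast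
  have S2: "support_fun \<Omega>2 = support_fun C2" using support_between[OF c2(2,3)] by blast
  have S12: "support_fun (\<Omega>1 \<inter> \<Omega>2) = support_fun (C1 \<inter> C2)"
  proof
    fix v
    show "support_fun (\<Omega>1 \<inter> \<Omega>2) v = support_fun (C1 \<inter> C2) v"
      by (rule support_between) (use c1 c2 cl in auto)
  qed
  have ex: "\<exists>v1 v2. v = v1 + v2 \<and>
      support_fun (C1 \<inter> C2) v = support_fun C1 v1 + support_fun C2 v2"
    if fv: "\<bar>support_fun (C1 \<inter> C2) v\<bar> \<noteq> \<infinity>" for v
  proof -
    obtain v1 v2 where "v = v1 + v2" and le: "support_fun C1 v1 + support_fun C2 v2 \<le> support_fun (C1 \<inter> C2) v"
      using support_exact[OF c1(1) c2(1) r1 r2 fv] by blast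
    moreover have "support_fun (C1 \<inter> C2) v \<le> support_fun C1 v1 + support_fun C2 v2"
      using support_easy[of C1 C2 v1 v2] \<open>v = v1 + v2\<close> by simp
    ultimately show ?thesis by (intro exI[of _ v1] exI[of _ v2]) auto
  qed
  have eq: "support_fun (C1 \<inter> C2) = infconv (support_fun C1) (support_fun C2)"
  proof
    fix v
    show "support_fun (C1 \<inter> C2) v = infconv (support_fun C1) (support_fun C2) v"
      unfolding infconv_def
    proof (rule antisym)
      show "support_fun (C1 \<inter> C2) v \<le> (INF p\<in>{p. fst p + snd p = v}. support_fun C1 (fst p) + support_fun C2 (snd p))"
      proof (rule INF_greatest)
        fix p :: "'a \<times> 'a" assume "p \<in> {p. fst p + snd p = v}"
        then show "support_fun (C1 \<inter> C2) v \<le> support_fun C1 (fst p) + support_fun C2 (snd p)"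
          using support_easy[of C1 C2 "fst p" "snd p"] by simp
      qed
    next
      show "(INF p\<in>{p. fst p + snd p = v}. support_fun C1 (fst p) + support_fun C2 (snd p)) \<le> support_fun (C1 \<inter> C2) v"
      proof (cases "\<bar>support_fun (C1 \<inter> C2) v\<bar> = \<infinity>")
        case True
        have "support_fun (C1 \<inter> C2) v \<noteq> -\<infinity>"
        proof -
          have "ereal (inner v x0) \<le> support_fun (C1 \<inter> C2) v"
            unfolding support_fun_def
            by (rule SUP_upper) (use r1 r2 rel_interior_subset in blast)
          then show ?thesis by auto
        qed
        with True have "support_fun (C1 \<inter> C2) v = \<infinity>" by auto
        then show ?thesis by simp
      next
        case False
        then obtain v1 v2 where v: "v = v1 + v2"
          "support_fun (C1 \<inter> C2) v = support_fun C1 v1 + support_fun C2 v2"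
          using ex[OF False] by blast
        have "(v1, v2) \<in> {p. fst p + snd p = v}" using v by simp
        then have "(INF p\<in>{p. fst p + snd p = v}. support_fun C1 (fst p) + support_fun C2 (snd p))
            \<le> support_fun C1 v1 + support_fun C2 v2"
          by (metis (no_types, lifting) INF_lower fst_conv snd_conv)
        then show ?thesis using v by simp
      qed
    qed
  qed
  show ?thesis unfolding S1 S2 S12 using eq ex by blast
qed

end
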